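(* Consider an instance of $k$-robust set cover with set-dependent inflations (universe $U$ of $n$ elements, $m$ sets, first-stage costs $b$ and second-stage costs $c$ with $b\le c$ componentwise), and a threshold $T\ge0$. Let $\beta\ge36\ln m$, let $S$ be the set of elements $v\in U$ such that the minimum $c$-cost of a set covering $v$ is at least $\beta\frac{T}{k}$, and let $\Phi_T$ be the greedy set cover of $S$ under the costs $b$. Let $\Phi^*$ be the first-stage family of an optimal solution and $T^*$ its second-stage $c$-cost. If $T\ge T^*$ then $b(\Phi_T)\le H_n\cdot(b(\Phi^* )+12\cdot T^* )$.
   Context: $k$-robust set cover with set-dependent inflations: universe $U$, sets $R_1,\dots,R_m$, first-stage costs $b\in\mathbb{R}_+^m$, second-stage costs $c\in\mathbb{R}_+^m$, integer $k\ge1$. A feasible solution is a first-stage family $E_0\subseteq[m]$ and, for every $\omega\subseteq U$ with $|\omega|=k$, a family $E_\omega$ such that sets in $E_0\cup E_\omega$ cover $\omega$; its cost is $b(E_0)+\max_\omega c(E_\omega)$, the second term being the second-stage cost. The greedy set cover algorithm repeatedly picks a set minimizing the ratio of its cost to the number of still-uncovered elements of $S$ it contains. $H_n=\sum_{i=1}^n\frac1i$. *)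

theory Defs
  imports "HOL-Analysis.Analysis"
begin

definition scenarios :: "'a set \<Rightarrow> nat \<Rightarrow> 'a set set" where
  "scenarios U k = {\<omega>. \<omega> \<subseteq> U \<and> card \<omega> = k}"

definition rsc_feasible ::
  "'a set \<Rightarrow> (nat \<Rightarrow> 'a set) \<Rightarrow> nat \<Rightarrow> nat \<Rightarrow> nat set \<Rightarrow> ('a set \<Rightarrow> nat set) \<Rightarrow> bool" where
  "rsc_feasible U R m k E0 E \<longleftrightarrow>
     E0 \<subseteq> {..<m} \<and>
     (\<forall>\<omega>\<in>scenarios U k. E \<omega> \<subseteq> {..<m} \<and> \<omega> \<subseteq> \<Union> (R ` (E0 \<union> E \<omega>)))"

definition second_stage_cost ::
  "'a set \<Rightarrow> nat \<Rightarrow> (nat \<Rightarrow> real) \<Rightarrow> ('a set \<Rightarrow> nat set) \<Rightarrow> real" where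
  "second_stage_cost U k c E = (MAX \<omega>\<in>scenarios U k. sum c (E \<omega>))"

definition rsc_cost ::
  "'a set \<Rightarrow> nat \<Rightarrow> (nat \<Rightarrow> real) \<Rightarrow> (nat \<Rightarrow> real) \<Rightarrow> nat set \<Rightarrow> ('a set \<Rightarrow> nat set) \<Rightarrow> real" where
  "rsc_cost U k b c E0 E = sum b E0 + second_stage_cost U k c E"

definition rsc_optimal ::
  "'a set \<Rightarrow> (nat \<Rightarrow> 'a set) \<Rightarrow> nat \<Rightarrow> nat \<Rightarrow> (nat \<Rightarrow> real) \<Rightarrow> (nat \<Rightarrow> real)
     \<Rightarrow> nat set \<Rightarrow> ('a set \<Rightarrow> nat set) \<Rightarrow> bool" where
  "rsc_optimal U R m k b c E0 E \<longleftrightarrow>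
     rsc_feasible U R m k E0 E \<and>
     (\<forall>E0' E'. rsc_feasible U R m k E0' E' \<longrightarrow> rsc_cost U k b c E0 E \<le> rsc_cost U k b c E0' E')"

definition min_cover_cost :: "(nat \<Rightarrow> 'a set) \<Rightarrow> nat \<Rightarrow> (nat \<Rightarrow> real) \<Rightarrow> 'a \<Rightarrow> real" where
  "min_cover_cost R m c v = Min (c ` {i. i < m \<and> v \<in> R i})"

text \<open>Greedy set cover (any tie-breaking): greedy_cover R m w X F means that, starting
  with uncovered elements X, some run of the greedy algorithm under costs w outputs the
  family F.\<close>
inductive greedy_cover :: "(nat \<Rightarrow> 'a set) \<Rightarrow> nat \<Rightarrow> (nat \<Rightarrow> real) \<Rightarrow> 'a set \<Rightarrow> nat set \<Rightarrow> bool"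
  for R m w where
  gc_done: "greedy_cover R m w {} {}"
| gc_step: "\<lbrakk> X \<noteq> {}; i < m; R i \<inter> X \<noteq> {};
          \<forall>j<m. R j \<inter> X \<noteq> {} \<longrightarrow> w i / real (card (R i \<inter> X)) \<le> w j / real (card (R j \<inter> X));
          greedy_cover R m w (X - R i) F \<rbrakk>
        \<Longrightarrow> greedy_cover R m w X (insert i F)"

end

theory Submission
  imports Defs
begin

lemma binom_ratio:
  fixes a y k :: nat
  assumes "a \<le> y"
  shows "(a choose k) * y^k \<le> (y choose k) * a^k"
proof (induction k)
  case 0 then show ?case by simp
next
  case (Suc k)
  have ida: "Suc k * (a choose Suc k) = (a - k) * (a choose k)"
    using times_binomial_minus1_eq[of "Suc k" a] binomial_absorb_comp[of a k] by simp
  have idy: "Suc k * (y choose Suc k) = (y - k) * (y choose k)"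
    using times_binomial_minus1_eq[of "Suc k" y] binomial_absorb_comp[of y k] by simp
  have key: "(a - k) * y \<le> (y - k) * a"
  proof (cases "a \<le> k")
    case True then show ?thesis by simp
  next
    case False
    then have "k \<le> y" using assms by simp
    have "(a - k) * y = a*y - k*y" by (simp add: diff_mult_distrib)
    also have "\<dots> \<le> a*y - k*a" using assms by (intro diff_le_mono2) simp
    also have "\<dots> = (y - k) * a" by (simp add: diff_mult_distrib2 mult.commute)
    finally show ?thesis .
  qed
  have "Suc k * ((a choose Suc k) * y ^ Suc k) = (Suc k * (a choose Suc k)) * (y * y^k)"
    by (simp only: power_Suc mult_ac)
  also have "\<dots> = ((a - k) * y) * ((a choose k) * y^k)"
    unfolding ida by (simp only: mult_ac)
  also have "\<dots> \<le> ((y - k) * a) * ((y choose k) * a^k)"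
    using key Suc.IH by (rule mult_mono) auto
  also have "\<dots> = (Suc k * (y choose Suc k)) * (a * a^k)"
    unfolding idy by (simp only: mult_ac)
  also have "\<dots> = Suc k * ((y choose Suc k) * a ^ Suc k)"
    by (simp only: power_Suc mult_ac)
  finally show ?case by (simp only: mult_le_cancel1)
qed

lemma harm_step:
  assumes "t \<le> n"
  shows "harm (n - t) + real t / real n \<le> (harm n :: real)"
  using assms
proof (induction t)
  case 0 then show ?case by simp
next
  case (Suc t)
  then have lt: "n - Suc t < n" "t < n" by auto
  have h: "harm (n - t) = harm (n - Suc t) + inverse (real (n - t)) "
    using harm_Suc[of "n - Suc t"] Suc.prems by (simp add: Suc_diff_Suc)
  have "inverse (real (n - t)) \<ge> 1 / real n"
    using lt by (simp add: inverse_eq_divide frac_le)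
  moreover have "real (Suc t) / real n = real t / real n + 1 / real n"
    by (simp add: add_divide_distrib)
  ultimately show ?case using Suc.IH lt h by linarith
qed

lemma fam_count:
  assumes "finite A"
  shows "card {F. F \<subseteq> A \<and> card F \<le> J} \<le> (card A + 1)^J"
proof (induction J)
  case 0
  have "{F. F \<subseteq> A \<and> card F \<le> 0} = {{}}"
  proof (intro equalityI subsetI)
    fix F assume "F \<in> {F. F \<subseteq> A \<and> card F \<le> 0}"
    then have "F \<subseteq> A" "card F = 0" by auto
    then have "F = {}" using assms by (metis card_0_eq finite_subset)
    then show "F \<in> {{}}" by simp
  qed auto
  then show ?case by simp
next
  case (Suc J)
  define G where "G = {F. F \<subseteq> A \<and> card F \<le> J}"
  have finG: "finite G" unfolding G_def using assms by (auto intro: finite_subset[of _ "Pow A"])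
  have "{F. F \<subseteq> A \<and> card F \<le> Suc J} \<subseteq> G \<union> (\<Union>a\<in>A. insert a ` G)"
  proof
    fix F assume F: "F \<in> {F. F \<subseteq> A \<and> card F \<le> Suc J}"
    show "F \<in> G \<union> (\<Union>a\<in>A. insert a ` G)"
    proof (cases "card F \<le> J")
      case True then show ?thesis using F unfolding G_def by auto
    next
      case False
      then have "F \<noteq> {}" by auto
      then obtain a where a: "a \<in> F" by auto
      have finF: "finite F" using F assms finite_subset by auto
      have "card (F - {a}) \<le> J" using F a finF by (auto simp: card_Diff_singleton)
      then have "F - {a} \<in> G" using F unfolding G_def by auto
      moreover have "F = insert a (F - {a})" using a by auto
      ultimately show ?thesis using a F by blast
    qed
  qed
  then have "card {F. F \<subseteq> A \<and> card F \<le> Suc J} \<le> card (G \<union> (\<Union>a\<in>A. insert a ` G))"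
    by (intro card_mono) (use finG assms in auto)
  also have "\<dots> \<le> card G + card (\<Union>a\<in>A. insert a ` G)" by (rule card_Un_le)
  also have "card (\<Union>a\<in>A. insert a ` G) \<le> (\<Sum>a\<in>A. card (insert a ` G))"
    using assms by (rule card_UN_le)
  also have "\<dots> \<le> (\<Sum>a\<in>A. card G)" by (intro sum_mono card_image_le finG)
  finally have "card {F. F \<subseteq> A \<and> card F \<le> Suc J} \<le> (card A + 1) * card G" by simp
  also have "\<dots> \<le> (card A + 1) * (card A + 1)^J" using Suc.IH unfolding G_def by (rule mult_left_mono) simp
  finally show ?case by simp
qed

lemma exp_count:
  fixes m k :: nat and \<beta> :: real
  assumes "m \<ge> 2" "\<beta> \<ge> 36 * ln (real m)" "k \<ge> 1"
  shows "(m+1)^(nat \<lfloor>real k / \<beta>\<rfloor>) < (12::nat)^k"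
proof -
  define J where "J = nat \<lfloor>real k / \<beta>\<rfloor>"
  have lnpos: "ln (real m) > 0" using assms by simp
  then have bpos: "\<beta> > 0" using assms by linarith
  have "real J \<le> real k / \<beta>" unfolding J_def
    using bpos by (cases "\<lfloor>real k / \<beta>\<rfloor> \<ge> 0") auto
  then have "real J * ln (real m) \<le> real k / \<beta> * ln (real m)"
    using lnpos by (intro mult_right_mono) auto
  also have "\<dots> \<le> real k / \<beta> * (\<beta> / 36)"
    using assms bpos by (intro mult_left_mono) auto
  also have "\<dots> = real k / 36" using bpos by simp
  finally have J1: "real J * ln (real m) \<le> real k / 36" .
  have "real ((m+1)^J) \<le> (real m ^ 2) ^ J"
  proof -
    have "real (m+1) \<le> real m ^ 2" using assms by (simp add: power2_eq_square) (smt (verit) of_nat_le_iff mult_le_mono1 nat_mult_1 le_trans add_leE numeral_2_eq_2 mult_2 nat_le_real_less of_nat_1 of_nat_add of_nat_mult)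
    then show ?thesis by (simp add: power_mono)
  qed
  also have "\<dots> = exp (2 * real J * ln (real m))"
    proof -
    have "(real m ^ 2) ^ J = exp (ln (real m)) ^ (2*J)" using assms by (simp add: power_mult)
    also have "\<dots> = exp (real (2*J) * ln (real m))" by (rule exp_of_nat_mult[symmetric])
    finally show ?thesis by simp
  qed
  also have "\<dots> \<le> exp (real k)" using J1 assms by simp
  also have "\<dots> = exp 1 ^ k" by (simp add: exp_of_nat_mult[symmetric])
  also have "\<dots> \<le> 3 ^ k" using exp_le by (intro power_mono) auto
  also have "\<dots> < 12 ^ k" using assms by (intro power_strict_mono) auto
  finally have "real ((m+1)^J) < real (12^k)" by simp
  then show ?thesis unfolding J_def by (simp only: of_nat_less_iff)
qed


lemma greedy_bound:
  assumes "greedy_cover R m w X F" "finite X" "\<forall>i<m. 0 \<le> w i" "0 \<le> Q"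
    "\<And>Y. Y \<subseteq> X \<Longrightarrow> Y \<noteq> {} \<Longrightarrow>
       \<exists>i<m. R i \<inter> Y \<noteq> {} \<and> w i / real (card (R i \<inter> Y)) \<le> Q / real (card Y)"
  shows "sum w F \<le> harm (card X) * Q \<and> F \<subseteq> {..<m} \<and> finite F"
  using assms
proof (induction rule: greedy_cover.induct)
  case gc_done then show ?case by (simp add: harm_def)
next
  case (gc_step X i F)
  have IH: "sum w F \<le> harm (card (X - R i)) * Q \<and> F \<subseteq> {..<m} \<and> finite F"
  proof (rule gc_step.IH)
    show "finite (X - R i)" using gc_step.prems(1) by simp
    fix Y assume "Y \<subseteq> X - R i" "Y \<noteq> {}"
    then show "\<exists>i<m. R i \<inter> Y \<noteq> {} \<and> w i / real (card (R i \<inter> Y)) \<le> Q / real (card Y)"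
      using gc_step.prems(4)[of Y] by blast
  qed (use gc_step.prems in auto)
  define t where "t = card (R i \<inter> X)"
  define n where "n = card X"
  have tpos: "t > 0" unfolding t_def using gc_step by auto
  have tn: "t \<le> n" unfolding t_def n_def using gc_step by (intro card_mono) auto
  have npos: "n > 0" using tpos tn by simp
  obtain j where j: "j < m" "R j \<inter> X \<noteq> {}" "w j / real (card (R j \<inter> X)) \<le> Q / real n"
    using gc_step.prems(4)[of X] gc_step.hyps(1) n_def by auto
  have "w i / real t \<le> Q / real n" using gc_step.hyps(4) j unfolding t_def by force
  then have wi: "w i \<le> real t * Q / real n" using tpos by (simp add: field_simps)
  have cd: "card (X - R i) = n - t"
    unfolding n_def t_def using gc_step.prems(1)
    by (metis Diff_Int2 Diff_Int_distrib2 Int_absorb Int_commute card_Diff_subset_Int finite_Int inf.cobounded1 Diff_Int)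
  have "sum w (insert i F) \<le> w i + sum w F"
  proof (cases "i \<in> F")
    case True then show ?thesis using gc_step.hyps(2) gc_step.prems(2) by (simp add: insert_absorb)
  next
    case False then show ?thesis using IH by simp
  qed
  also have "\<dots> \<le> real t * Q / real n + harm (n - t) * Q" using wi IH cd by simp
  also have "\<dots> = (harm (n - t) + real t / real n) * Q" by (simp add: algebra_simps)
  also have "\<dots> \<le> harm n * Q" using harm_step[OF tn] gc_step.prems(3) by (intro mult_right_mono) auto
  finally show ?case using IH gc_step.hyps(2) n_def by simp
qed

lemma count_core:
  fixes Y :: "'a set" and Fam :: "'a set \<Rightarrow> nat set" and R :: "nat \<Rightarrow> 'a set"
  assumes finY: "finite Y" and k: "k \<le> card Y"
    and fam: "\<And>\<omega>. \<omega> \<subseteq> Y \<Longrightarrow> card \<omega> = k \<Longrightarrow>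
       \<omega> \<subseteq> Y \<inter> \<Union>(R ` Fam \<omega>) \<and> 12 * card (Y \<inter> \<Union>(R ` Fam \<omega>)) < card Y \<and> Fam \<omega> \<in> FF"
    and finFF: "finite FF" and cardFF: "card FF < 12^k"
  shows False
proof -
  define P where "P = {\<omega>. \<omega> \<subseteq> Y \<and> card \<omega> = k}"
  define C where "C F = Y \<inter> \<Union>(R ` F)" for F
  define y where "y = card Y"
  have finFP: "finite (Fam ` P)" using finFF fam unfolding P_def by (auto intro: finite_subset)
  have cardFP: "card (Fam ` P) \<le> card FF" using finFF fam unfolding P_def by (intro card_mono) auto
  have CF: "\<And>F. F \<in> Fam ` P \<Longrightarrow> 12 * card (C F) < y \<and> C F \<subseteq> Y"
    using fam unfolding P_def C_def y_def by auto
  have "P \<subseteq> (\<Union>F\<in>Fam ` P. {\<omega>. \<omega> \<subseteq> C F \<and> card \<omega> = k})"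
    using fam unfolding P_def C_def by blast
  then have "card P \<le> card (\<Union>F\<in>Fam ` P. {\<omega>. \<omega> \<subseteq> C F \<and> card \<omega> = k})"
    using finFP finY CF by (intro card_mono) (auto intro!: finite_subset[of _ "Pow Y"])
  also have "\<dots> \<le> (\<Sum>F\<in>Fam ` P. card {\<omega>. \<omega> \<subseteq> C F \<and> card \<omega> = k})"
    using finFP by (rule card_UN_le)
  also have "\<dots> = (\<Sum>F\<in>Fam ` P. card (C F) choose k)"
    using CF finY by (intro sum.cong refl n_subsets) (auto intro: finite_subset)
  finally have P1: "(y choose k) \<le> (\<Sum>F\<in>Fam ` P. card (C F) choose k)"
    unfolding P_def y_def using n_subsets[OF finY] by simp
  have "(y choose k) * y^k * 12^k \<le> (\<Sum>F\<in>Fam ` P. (card (C F) choose k) * y^k * 12^k)"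
    using P1 by (simp add: sum_distrib_right[symmetric])
  also have "\<dots> \<le> (\<Sum>F\<in>Fam ` P. (y choose k) * y^k)"
  proof (rule sum_mono)
    fix F assume F: "F \<in> Fam ` P"
    have a: "12 * card (C F) < y" using CF F by auto
    have "(card (C F) choose k) * y^k * 12^k \<le> (y choose k) * card (C F)^k * 12^k"
      using binom_ratio[of "card (C F)" y k] a by simp
    also have "\<dots> = (y choose k) * (12 * card (C F))^k" by (simp add: power_mult_distrib)
    also have "\<dots> \<le> (y choose k) * y^k" using a by (intro mult_left_mono power_mono) auto
    finally show "(card (C F) choose k) * y^k * 12^k \<le> (y choose k) * y^k" .
  qed
  also have "\<dots> = card (Fam ` P) * ((y choose k) * y^k)" by simp
  finally have ineq: "12^k * ((y choose k) * y^k) \<le> card (Fam ` P) * ((y choose k) * y^k)"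
    by (simp add: mult_ac)
  have "(y choose k) * y^k > 0" using k unfolding y_def by (cases "card Y = 0") auto
  then have "12^k \<le> card (Fam ` P)" using ineq mult_le_cancel2 by blast
  then show False using cardFP cardFF by simp
qed


theorem mainTheorem18:
  fixes U :: "'a set" and R :: "nat \<Rightarrow> 'a set" and m k :: nat
    and b c :: "nat \<Rightarrow> real" and T \<beta> :: real
    and E0 :: "nat set" and E :: "'a set \<Rightarrow> nat set" and S :: "'a set" and \<Phi> :: "nat set"
  assumes finU: "finite U"
    and sets_in_U: "\<forall>i<m. R i \<subseteq> U"
    and b_nonneg: "\<forall>i<m. 0 \<le> b i"
    and b_le_c: "\<forall>i<m. b i \<le> c i"
    and k_ge: "1 \<le> k" and k_le: "k \<le> card U"
    and T_nonneg: "0 \<le> T"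
    and beta: "\<beta> \<ge> 36 * ln (real m)"
    and S_def: "S = {v \<in> U. min_cover_cost R m c v \<ge> \<beta> * T / real k}"
    and greedy: "greedy_cover R m b S \<Phi>"
    and opt: "rsc_optimal U R m k b c E0 E"
    and T_ge: "T \<ge> second_stage_cost U k c E"
  shows "sum b \<Phi> \<le> harm (card U) * (sum b E0 + 12 * second_stage_cost U k c E)"
proof -
  define Ts where "Ts = second_stage_cost U k c E"
  have feas: "rsc_feasible U R m k E0 E" using opt unfolding rsc_optimal_def by blast
  have E0m: "E0 \<subseteq> {..<m}" using feas unfolding rsc_feasible_def by blast
  have Em: "\<And>\<omega>. \<omega> \<in> scenarios U k \<Longrightarrow> E \<omega> \<subseteq> {..<m}"
    using feas unfolding rsc_feasible_def by blast
  have cov: "\<And>\<omega>. \<omega> \<in> scenarios U k \<Longrightarrow> \<omega> \<subseteq> \<Union>(R ` (E0 \<union> E \<omega>))"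
    using feas unfolding rsc_feasible_def by blast
  have c_nonneg: "\<And>i. i < m \<Longrightarrow> 0 \<le> c i" using b_nonneg b_le_c by force
  have scen_fin: "finite (scenarios U k)"
  proof -
    have "scenarios U k \<subseteq> Pow U" unfolding scenarios_def by auto
    then show ?thesis using finU by (simp add: finite_subset)
  qed
  have superset: "\<And>Z. Z \<subseteq> U \<Longrightarrow> card Z \<le> k \<Longrightarrow> \<exists>\<omega>\<in>scenarios U k. Z \<subseteq> \<omega>"
  proof -
    fix Z assume Z: "Z \<subseteq> U" "card Z \<le> k"
    have finZ: "finite Z" using Z finU finite_subset by auto
    have "card (U - Z) = card U - card Z" using Z finZ by (simp add: card_Diff_subset)
    then have "k - card Z \<le> card (U - Z)" using k_le by simp
    then obtain W where W: "W \<subseteq> U - Z" "card W = k - card Z" "finite W"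
      by (rule obtain_subset_with_card_n)
    have "card (Z \<union> W) = card Z + card W" using W finZ by (intro card_Un_disjoint) auto
    then have "Z \<union> W \<in> scenarios U k" using W Z unfolding scenarios_def by auto
    then show "\<exists>\<omega>\<in>scenarios U k. Z \<subseteq> \<omega>" by blast
  qed
  obtain \<omega>0 where \<omega>0: "\<omega>0 \<in> scenarios U k" using superset[of "{}"] by auto
  have Ts_ge: "\<And>\<omega>. \<omega> \<in> scenarios U k \<Longrightarrow> sum c (E \<omega>) \<le> Ts"
    unfolding Ts_def second_stage_cost_def using scen_fin by (intro Max_ge) auto
  have Ts_nonneg: "0 \<le> Ts"
  proof -
    have "0 \<le> sum c (E \<omega>0)" using Em[OF \<omega>0] c_nonneg by (intro sum_nonneg) auto
    then show ?thesis using Ts_ge[OF \<omega>0] by linarith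
  qed
  have TsT: "Ts \<le> T" using T_ge unfolding Ts_def .
  have cS: "\<And>v i. v \<in> S \<Longrightarrow> i < m \<Longrightarrow> v \<in> R i \<Longrightarrow> \<beta> * T / real k \<le> c i"
  proof -
    fix v i assume a: "v \<in> S" "i < m" "v \<in> R i"
    have "\<beta> * T / real k \<le> min_cover_cost R m c v" using a S_def by auto
    also have "\<dots> \<le> c i" unfolding min_cover_cost_def using a by (intro Min_le) auto
    finally show "\<beta> * T / real k \<le> c i" .
  qed
  have SU: "S \<subseteq> U" using S_def by auto
  define Q where "Q = sum b E0 + 12 * Ts"
  have b0: "0 \<le> sum b E0" using E0m b_nonneg by (intro sum_nonneg) auto
  have Q_nonneg: "0 \<le> Q" unfolding Q_def using b0 Ts_nonneg by simp
  have finE0: "finite E0" using E0m finite_subset by blast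
  have ratio: "\<exists>i<m. R i \<inter> Y \<noteq> {} \<and> b i / real (card (R i \<inter> Y)) \<le> Q / real (card Y)"
    if Y: "Y \<subseteq> S" "Y \<noteq> {}" for Y
  proof (rule ccontr)
    assume neg: "\<not> (\<exists>i<m. R i \<inter> Y \<noteq> {} \<and> b i / real (card (R i \<inter> Y)) \<le> Q / real (card Y))"
    have finY: "finite Y" using Y SU finU finite_subset by blast
    have ypos: "card Y > 0" using Y finY by (simp add: card_gt_0_iff)
    define r where "r = Q / real (card Y)"
    have r_nonneg: "0 \<le> r" unfolding r_def using Q_nonneg by simp
    have rY: "r * real (card Y) = Q" unfolding r_def using ypos by simp
    have strict: "r * real (card (R i \<inter> Y)) < b i" if "i < m" "R i \<inter> Y \<noteq> {}" for i
    proof -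
      have "card (R i \<inter> Y) > 0" using that finY by (simp add: card_gt_0_iff)
      moreover have "\<not> b i / real (card (R i \<inter> Y)) \<le> Q / real (card Y)" using neg that by blast
      then have "r < b i / real (card (R i \<inter> Y))" unfolding r_def by linarith
      ultimately show ?thesis by (simp add: field_simps)
    qed
    have weak: "r * real (card (R i \<inter> Y)) \<le> b i" if "i < m" for i
    proof (cases "R i \<inter> Y = {}")
      case True then show ?thesis using b_nonneg that by simp
    next
      case False then show ?thesis using strict[OF that] by simp
    qed
    define Y0 where "Y0 = Y \<inter> \<Union>(R ` E0)"
    define Y' where "Y' = Y - Y0"
    have Y0eq: "Y0 = (\<Union>i\<in>E0. R i \<inter> Y)" unfolding Y0_def by auto
    have cY0: "real (card Y0) \<le> (\<Sum>i\<in>E0. real (card (R i \<inter> Y)))"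
      unfolding Y0eq using card_UN_le[OF finE0, of "\<lambda>i. R i \<inter> Y"] by (simp flip: of_nat_sum)
    have B: "r * real (card Y0) \<le> sum b E0"
    proof -
      have "r * real (card Y0) \<le> r * (\<Sum>i\<in>E0. real (card (R i \<inter> Y)))"
        using cY0 r_nonneg by (rule mult_left_mono)
      also have "\<dots> = (\<Sum>i\<in>E0. r * real (card (R i \<inter> Y)))" by (simp add: sum_distrib_left)
      also have "\<dots> \<le> sum b E0" using weak E0m by (intro sum_mono) auto
      finally show ?thesis .
    qed
    have Bs: "r * real (card Y0) < sum b E0" if Y0ne: "Y0 \<noteq> {}"
    proof -
      obtain i where i: "i \<in> E0" "R i \<inter> Y \<noteq> {}" using Y0ne unfolding Y0_def by blast
      have "r * real (card Y0) \<le> r * (\<Sum>i\<in>E0. real (card (R i \<inter> Y)))"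
        using cY0 r_nonneg by (rule mult_left_mono)
      also have "\<dots> = (\<Sum>i\<in>E0. r * real (card (R i \<inter> Y)))" by (simp add: sum_distrib_left)
      also have "\<dots> < sum b E0"
        using weak E0m strict i by (intro sum_strict_mono_ex1 finE0) auto
      finally show ?thesis .
    qed
    have cardY: "card Y = card Y0 + card Y'"
    proof -
      have "Y0 \<subseteq> Y" unfolding Y0_def by auto
      moreover have "finite Y0" using finY unfolding Y0_def by simp
      ultimately have "card Y' = card Y - card Y0" "card Y0 \<le> card Y"
        unfolding Y'_def using finY by (auto simp: card_Diff_subset card_mono)
      then show ?thesis by simp
    qed
    have Y'S: "Y' \<subseteq> S" unfolding Y'_def using Y by auto
    have Y'notE0: "\<And>v i. v \<in> Y' \<Longrightarrow> i \<in> E0 \<Longrightarrow> v \<notin> R i" unfolding Y'_def Y0_def by auto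
    have finY': "finite Y'" unfolding Y'_def using finY by simp
    define Fam where "Fam \<omega> = {i \<in> E \<omega>. R i \<inter> Y' \<noteq> {}}" for \<omega>
    define C where "C \<omega> = Y' \<inter> \<Union>(R ` Fam \<omega>)" for \<omega>
    have famcov: "\<omega> \<inter> Y' \<subseteq> C \<omega>" if scw: "\<omega> \<in> scenarios U k" for \<omega>
    proof
      fix v assume v: "v \<in> \<omega> \<inter> Y'"
      then obtain i where i: "i \<in> E0 \<union> E \<omega>" "v \<in> R i" using cov[OF scw] by blast
      then have "i \<in> E \<omega>" using Y'notE0 v by blast
      then show "v \<in> C \<omega>" using i v unfolding C_def Fam_def by blast
    qed
    have Fam_m: "Fam \<omega> \<subseteq> {..<m}" if "\<omega> \<in> scenarios U k" for \<omega>
      using Em[OF that] unfolding Fam_def by auto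
    have famcost: "sum c (Fam \<omega>) \<le> Ts" if "\<omega> \<in> scenarios U k" for \<omega>
    proof -
      have "sum c (Fam \<omega>) \<le> sum c (E \<omega>)"
        using Em[OF that] c_nonneg unfolding Fam_def
        by (intro sum_mono2) (auto intro: finite_subset)
      then show ?thesis using Ts_ge[OF that] by simp
    qed
    have famC: "r * real (card (C \<omega>)) < Ts" if scw: "\<omega> \<in> scenarios U k" and Fne2: "Fam \<omega> \<noteq> {}" for \<omega>
    proof -
      have finF: "finite (Fam \<omega>)" using Fam_m[OF scw] finite_subset by blast
      have CC: "C \<omega> = (\<Union>i\<in>Fam \<omega>. R i \<inter> Y')" unfolding C_def by auto
      have "real (card (C \<omega>)) \<le> (\<Sum>i\<in>Fam \<omega>. real (card (R i \<inter> Y')))"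
        unfolding CC using card_UN_le[OF finF, of "\<lambda>i. R i \<inter> Y'"] by (simp flip: of_nat_sum)
      also have "\<dots> \<le> (\<Sum>i\<in>Fam \<omega>. real (card (R i \<inter> Y)))"
        using finY unfolding Y'_def by (intro sum_mono) (auto intro: card_mono)
      finally have "r * real (card (C \<omega>)) \<le> r * (\<Sum>i\<in>Fam \<omega>. real (card (R i \<inter> Y)))"
        using r_nonneg by (rule mult_left_mono)
      also have "\<dots> = (\<Sum>i\<in>Fam \<omega>. r * real (card (R i \<inter> Y)))" by (simp add: sum_distrib_left)
      also have "\<dots> < (\<Sum>i\<in>Fam \<omega>. b i)"
      proof (rule sum_strict_mono_ex1[OF finF])
        show "\<forall>x\<in>Fam \<omega>. r * real (card (R x \<inter> Y)) \<le> b x" using weak Fam_m[OF scw] by auto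
        obtain i where "i \<in> Fam \<omega>" using Fne2 by auto
        then have "i < m" "R i \<inter> Y \<noteq> {}" using Fam_m[OF scw] unfolding Fam_def Y'_def by auto
        then show "\<exists>a\<in>Fam \<omega>. r * real (card (R a \<inter> Y)) < b a" using \<open>i \<in> Fam \<omega>\<close> strict by blast
      qed
      also have "\<dots> \<le> sum c (Fam \<omega>)" using b_le_c Fam_m[OF scw] by (intro sum_mono) auto
      also have "\<dots> \<le> Ts" using famcost[OF scw] .
      finally show ?thesis .
    qed
    have key: "r * real (card Y') < 12 * Ts" if "Y' \<noteq> {}"
    proof (cases "card Y' \<le> k")
      case True
      obtain \<omega> where \<omega>: "\<omega> \<in> scenarios U k" "Y' \<subseteq> \<omega>"
        using superset[of Y'] True Y'S SU by auto
      have "Y' \<subseteq> C \<omega>" using famcov[OF \<omega>(1)] \<omega>(2) by auto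
      then have CY: "C \<omega> = Y'" unfolding C_def by auto
      have "Fam \<omega> \<noteq> {}" using \<open>Y' \<subseteq> C \<omega>\<close> that unfolding C_def by auto
      then have "r * real (card Y') < Ts" using famC[OF \<omega>(1)] CY by simp
      then show ?thesis using Ts_nonneg by simp
    next
      case False
      show ?thesis
      proof (rule ccontr)
        assume "\<not> r * real (card Y') < 12 * Ts"
        then have big: "12 * Ts \<le> r * real (card Y')" by simp
        have props: "\<omega> \<subseteq> Y' \<inter> \<Union>(R ` Fam \<omega>) \<and> 12 * card (Y' \<inter> \<Union>(R ` Fam \<omega>)) < card Y'
                     \<and> real (card (Fam \<omega>)) * \<beta> \<le> real k \<and> Fam \<omega> \<subseteq> {..<m}"
          if \<omega>: "\<omega> \<subseteq> Y'" "card \<omega> = k" for \<omega>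
        proof -
          have sc: "\<omega> \<in> scenarios U k" using \<omega> Y'S SU unfolding scenarios_def by auto
          have ne: "\<omega> \<noteq> {}" using \<omega> k_ge by auto
          have sub: "\<omega> \<subseteq> C \<omega>" using famcov[OF sc] \<omega> by auto
          then have Fne: "Fam \<omega> \<noteq> {}" using ne unfolding C_def by auto
          have fc: "r * real (card (C \<omega>)) < Ts" using famC[OF sc Fne] .
          have "0 \<le> r * real (card (C \<omega>))" using r_nonneg by simp
          then have Tpos: "Ts > 0" using fc by linarith
          have rpos: "r > 0" using big Tpos r_nonneg by (cases "r = 0") auto
          have "r * (12 * real (card (C \<omega>))) < r * real (card Y')" using fc big by linarith
          then have "12 * real (card (C \<omega>)) < real (card Y')" using rpos by simp
          then have c12: "12 * card (C \<omega>) < card Y'" by linarith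
          have finF: "finite (Fam \<omega>)" using Fam_m[OF sc] finite_subset by blast
          have mpos: "m \<ge> 1" using Fne Fam_m[OF sc] by auto
          have "ln (real m) \<ge> 0" using mpos by (intro ln_ge_zero) simp
          then have bnn: "\<beta> \<ge> 0" using beta by linarith
          have each: "\<beta> * Ts / real k \<le> c i" if iF: "i \<in> Fam \<omega>" for i
          proof -
            obtain v where "v \<in> R i" "v \<in> Y'" using iF unfolding Fam_def by auto
            moreover have "i < m" using iF Fam_m[OF sc] by auto
            ultimately have "\<beta> * T / real k \<le> c i" using cS Y'S by auto
            moreover have "\<beta> * Ts / real k \<le> \<beta> * T / real k"
              using TsT bnn by (intro divide_right_mono mult_left_mono) auto
            ultimately show ?thesis by linarith
          qed
          have "real (card (Fam \<omega>)) * (\<beta> * Ts / real k) \<le> sum c (Fam \<omega>)"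
            using sum_mono[of "Fam \<omega>" "\<lambda>_. \<beta> * Ts / real k" c] each by simp
          also have "\<dots> \<le> Ts" using famcost[OF sc] .
          finally have "real (card (Fam \<omega>)) * \<beta> * Ts \<le> Ts * real k"
            using k_ge by (simp add: field_simps)
          then have "real (card (Fam \<omega>)) * \<beta> \<le> real k" using Tpos
            by (simp add: mult.commute mult.left_commute)
          then show ?thesis using sub c12 Fam_m[OF sc] unfolding C_def by auto
        qed
        show False
        proof (cases "m \<le> 1")
          case True
          have "card (Pow {..<m}) < 12^k"
          proof -
            have "card (Pow {..<m}) = 2^m" by (simp add: card_Pow)
            also have "\<dots> \<le> 2^1" using True by (intro power_increasing) auto
            also have "(2::nat)^1 < 12^1" by simp
            also have "(12::nat)^1 \<le> 12^k" using k_ge by (intro power_increasing) auto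
            finally show ?thesis .
          qed
          show False
          proof (rule count_core[of Y' k R Fam "Pow {..<m}"])
            show "finite Y'" by (rule finY')
            show "k \<le> card Y'" using \<open>\<not> card Y' \<le> k\<close> by simp
            show "finite (Pow {..<m})" by simp
            show "card (Pow {..<m}) < 12 ^ k" by fact
            fix \<omega> assume a: "\<omega> \<subseteq> Y'" "card \<omega> = k"
            show "\<omega> \<subseteq> Y' \<inter> \<Union>(R ` Fam \<omega>) \<and> 12 * card (Y' \<inter> \<Union>(R ` Fam \<omega>)) < card Y' \<and> Fam \<omega> \<in> Pow {..<m}"
              using props[OF a] by blast
          qed
        next
          case False
          define J where "J = nat \<lfloor>real k / \<beta>\<rfloor>"
          have m2: "m \<ge> 2" using False by simp
          have "ln (real m) > 0" using m2 by (intro ln_gt_zero) simp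
          then have bpos: "\<beta> > 0" using beta by linarith
          have cnt: "card {F. F \<subseteq> {..<m} \<and> card F \<le> J} < 12^k"
            using fam_count[of "{..<m}" J] exp_count[OF m2 beta k_ge] unfolding J_def by simp
          have famJ: "card (Fam \<omega>) \<le> J" if "\<omega> \<subseteq> Y'" "card \<omega> = k" for \<omega>
          proof -
            have "real (card (Fam \<omega>)) \<le> real k / \<beta>" using props[OF that] bpos by (simp add: field_simps)
            then have "int (card (Fam \<omega>)) \<le> \<lfloor>real k / \<beta>\<rfloor>" by (simp add: le_floor_iff)
            then show ?thesis unfolding J_def by linarith
          qed
          show False
          proof (rule count_core[of Y' k R Fam "{F. F \<subseteq> {..<m} \<and> card F \<le> J}"])
            show "finite Y'" by (rule finY')
            show "k \<le> card Y'" using \<open>\<not> card Y' \<le> k\<close> by simp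
            show "finite {F. F \<subseteq> {..<m} \<and> card F \<le> J}" by (rule finite_subset[of _ "Pow {..<m}"]) auto
            show "card {F. F \<subseteq> {..<m} \<and> card F \<le> J} < 12 ^ k" by (rule cnt)
            fix \<omega> assume a: "\<omega> \<subseteq> Y'" "card \<omega> = k"
            show "\<omega> \<subseteq> Y' \<inter> \<Union>(R ` Fam \<omega>) \<and> 12 * card (Y' \<inter> \<Union>(R ` Fam \<omega>)) < card Y' \<and> Fam \<omega> \<in> {F. F \<subseteq> {..<m} \<and> card F \<le> J}"
              using props[OF a] famJ[OF a] by blast
          qed
        qed
      qed
    qed
    show False
    proof (cases "Y' = {}")
      case True
      then have "Y0 \<noteq> {}" using Y cardY ypos by auto
      then have "r * real (card Y0) < sum b E0" by (rule Bs)
      moreover have "card Y = card Y0" using cardY True by simp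
      ultimately show False using rY Q_def Ts_nonneg by simp
    next
      case False
      then have "r * real (card Y') < 12 * Ts" by (rule key)
      then have "r * real (card Y) < Q" using B cardY unfolding Q_def by (simp add: distrib_left)
      then show False using rY by simp
    qed
  qed
  have G: "sum b \<Phi> \<le> harm (card S) * Q"
  proof -
    have finS: "finite S" using SU finU by (rule finite_subset)
    show ?thesis using greedy_bound[OF greedy finS b_nonneg Q_nonneg ratio] by (rule conjunct1)
  qed
  also have "\<dots> \<le> harm (card U) * Q"
    using Q_nonneg SU finU by (intro mult_right_mono harm_mono card_mono) auto
  finally show ?thesis unfolding Q_def Ts_def .
qed

end
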